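(* Let $F$ be a uniformly recurrent set. Then every $F$-thin bifix code $X\subset F$ is finite, and every finite bifix code $X\subset F$ is contained in a finite $F$-maximal bifix code $Y\subset F$.
   Context: $A$ is a finite alphabet. $F\subset A^*$ is uniformly recurrent if it is nonempty, closed under factors, every $w\in F$ has some letter $a$ with $wa\in F$, and for every $u\in F$ there is $n\ge1$ such that $u$ is a factor of every word of $F\cap A^n$. A bifix code is a set of nonempty words none of which is a proper prefix or proper suffix of another. $X\subset F$ is $F$-thin if some word of $F$ is not a factor of any word of $X$; it is $F$-maximal bifix if not properly contained in any bifix code contained in $F$. *)

theory Defs
  imports Main "HOL-Library.Sublist"
begin

text \<open>Words over an alphabet A are lists with letters in A; factors are contiguous sublists.\<close>

definition factorial_set :: "'a list set \<Rightarrow> bool" where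
  "factorial_set F \<longleftrightarrow> (\<forall>w\<in>F. \<forall>u. sublist u w \<longrightarrow> u \<in> F)"

definition uniformly_recurrent :: "'a set \<Rightarrow> 'a list set \<Rightarrow> bool" where
  "uniformly_recurrent A F \<longleftrightarrow>
     F \<subseteq> lists A \<and> F \<noteq> {} \<and> factorial_set F \<and>
     (\<forall>w\<in>F. \<exists>a\<in>A. w @ [a] \<in> F) \<and>
     (\<forall>u\<in>F. \<exists>n\<ge>1. \<forall>w\<in>F. length w = n \<longrightarrow> sublist u w)"

definition bifix_code :: "'a list set \<Rightarrow> bool" where
  "bifix_code X \<longleftrightarrow> [] \<notin> X \<and>
     (\<forall>x\<in>X. \<forall>y\<in>X. \<not> strict_prefix x y \<and> \<not> strict_suffix x y)"

definition F_thin :: "'a list set \<Rightarrow> 'a list set \<Rightarrow> bool" where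
  "F_thin F X \<longleftrightarrow> X \<subseteq> F \<and> (\<exists>w\<in>F. \<forall>x\<in>X. \<not> sublist w x)"

definition F_maximal_bifix :: "'a list set \<Rightarrow> 'a list set \<Rightarrow> bool" where
  "F_maximal_bifix F X \<longleftrightarrow> bifix_code X \<and> X \<subseteq> F \<and>
     (\<forall>Y. bifix_code Y \<and> Y \<subseteq> F \<and> X \<subseteq> Y \<longrightarrow> Y = X)"

end

theory Submission imports Defs begin

inductive_set ystar :: "'a list set \<Rightarrow> 'a list set" for Y where
  ys_nil: "[] \<in> ystar Y"
| ys_cons: "y \<in> Y \<Longrightarrow> u \<in> ystar Y \<Longrightarrow> y @ u \<in> ystar Y"

lemma ystar_app: "a \<in> ystar Y \<Longrightarrow> b \<in> ystar Y \<Longrightarrow> a @ b \<in> ystar Y"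
  by (induction a rule: ystar.induct) (auto intro: ystar.intros)

lemma ystar_single: "y \<in> Y \<Longrightarrow> y \<in> ystar Y"
  using ys_cons[OF _ ys_nil] by fastforce

lemma ystar_snoc: "u \<in> ystar Y \<Longrightarrow> u \<noteq> [] \<Longrightarrow> \<exists>r y. u = r @ y \<and> y \<in> Y \<and> r \<in> ystar Y"
proof (induction u rule: ystar.induct)
  case ys_nil then show ?case by simp
next
  case (ys_cons y u)
  show ?case
  proof (cases "u = []")
    case True then show ?thesis using ys_cons ystar.ys_nil by fastforce
  next
    case False
    then obtain r y' where "u = r @ y'" "y' \<in> Y" "r \<in> ystar Y" using ys_cons by blast
    then show ?thesis using ys_cons ystar.ys_cons[of y Y r] by (intro exI[of _ "y @ r"] exI[of _ y']) auto
  qed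
qed

lemma ystar_cons_dec: "u \<in> ystar Y \<Longrightarrow> u \<noteq> [] \<Longrightarrow> \<exists>y r. u = y @ r \<and> y \<in> Y \<and> r \<in> ystar Y"
  by (cases rule: ystar.cases) auto

lemma bif_prefix_eq: "bifix_code Y \<Longrightarrow> y1 \<in> Y \<Longrightarrow> y2 \<in> Y \<Longrightarrow> prefix y1 y2 \<Longrightarrow> y1 = y2"
  unfolding bifix_code_def strict_prefix_def by blast

lemma bif_suffix_eq: "bifix_code Y \<Longrightarrow> y1 \<in> Y \<Longrightarrow> y2 \<in> Y \<Longrightarrow> suffix y1 y2 \<Longrightarrow> y1 = y2"
  unfolding bifix_code_def strict_suffix_def by blast

lemma pcancel: "a \<in> ystar Y \<Longrightarrow> bifix_code Y \<Longrightarrow> a @ b \<in> ystar Y \<Longrightarrow> b \<in> ystar Y"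
proof (induction a arbitrary: b rule: ystar.induct)
  case ys_nil then show ?case by simp
next
  case (ys_cons y u)
  note bif = \<open>bifix_code Y\<close>
  have yY: "y \<in> Y" by fact
  have ub: "(y @ u) @ b \<in> ystar Y" by fact
  have "y \<noteq> []" using yY bif unfolding bifix_code_def by blast
  then have ne: "(y @ u) @ b \<noteq> []" by simp
  obtain y' r where h: "(y @ u) @ b = y' @ r" "y' \<in> Y" "r \<in> ystar Y"
    using ystar_cons_dec[OF ub ne] by blast
  have p1: "prefix y (y' @ r)" using h(1) by (metis append.assoc prefix_def)
  have p2: "prefix y' (y' @ r)" by simp
  have "prefix y y' \<or> prefix y' y" using prefix_same_cases[OF p1 p2] .
  then have "y = y'" using bif_prefix_eq[OF bif] yY h(2) by metis
  then have "r = u @ b" using h(1) by simp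
  then have "u @ b \<in> ystar Y" using h(3) by simp
  then show ?case using ys_cons.IH[OF bif] by blast
qed

lemma scancel_aux: "bifix_code Y \<Longrightarrow> \<forall>a b. length a = n \<longrightarrow> a \<in> ystar Y \<longrightarrow> b @ a \<in> ystar Y \<longrightarrow> b \<in> ystar Y"
proof (induction n rule: less_induct)
  case (less n)
  note bif = \<open>bifix_code Y\<close>
  show ?case
  proof (intro allI impI)
    fix a b assume len: "length a = n" and aY: "a \<in> ystar Y" and baY: "b @ a \<in> ystar Y"
    show "b \<in> ystar Y"
    proof (cases "a = []")
      case True then show ?thesis using baY by simp
    next
      case False
      then obtain r y where a: "a = r @ y" "y \<in> Y" "r \<in> ystar Y" using ystar_snoc[OF aY] by blast
      have ne: "b @ a \<noteq> []" using False by simp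
      obtain r' y' where b: "b @ a = r' @ y'" "y' \<in> Y" "r' \<in> ystar Y"
        using ystar_snoc[OF baY ne] by blast
      have s1: "suffix y (b @ a)" using a(1) by (metis append.assoc suffix_def)
      have s2: "suffix y' (b @ a)" using b(1) by (metis suffix_def)
      have "suffix y y' \<or> suffix y' y" using suffix_same_cases[OF s1 s2] .
      then have "y = y'" using bif_suffix_eq[OF bif] a(2) b(2) by metis
      then have rr: "r' = b @ r" using a(1) b(1) by simp
      have "y \<noteq> []" using a(2) bif unfolding bifix_code_def by blast
      then have "length y > 0" by simp
      then have lt: "length r < n" using len arg_cong[OF a(1), of length] by (cases y) auto
      have "b @ r \<in> ystar Y" using rr b(3) by simp
      then show ?thesis using less.IH[OF lt bif] a(3) by blast
    qed
  qed
qed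

lemma scancel: "a \<in> ystar Y \<Longrightarrow> bifix_code Y \<Longrightarrow> b @ a \<in> ystar Y \<Longrightarrow> b \<in> ystar Y"
  using scancel_aux by blast

lemma ystar_nonempty_suffix: "u \<in> ystar Y \<Longrightarrow> u \<noteq> [] \<Longrightarrow> \<exists>y\<in>Y. suffix y u"
  using ystar_snoc by (fastforce simp: suffix_def)

lemma left_greedy_aux: "bifix_code Y \<Longrightarrow> \<forall>t. length t = n \<longrightarrow> (\<exists>a b. t = a @ b \<and> a \<in> ystar Y \<and> (\<forall>y\<in>Y. \<not> prefix y b))"
proof (induction n rule: less_induct)
  case (less n)
  note bif = \<open>bifix_code Y\<close>
  show ?case
  proof (intro allI impI)
    fix t :: "'a list" assume len: "length t = n"
    show "\<exists>a b. t = a @ b \<and> a \<in> ystar Y \<and> (\<forall>y\<in>Y. \<not> prefix y b)"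
    proof (cases "\<exists>y\<in>Y. prefix y t")
      case True
      then obtain y t' where yt: "y \<in> Y" "t = y @ t'" by (auto simp: prefix_def)
      have "y \<noteq> []" using yt(1) bif unfolding bifix_code_def by blast
      then have "length y > 0" by simp
      then have lt: "length t' < n" using len arg_cong[OF yt(2), of length] by (cases y) auto
      obtain a b where ab: "t' = a @ b" "a \<in> ystar Y" "\<forall>y\<in>Y. \<not> prefix y b"
        using less.IH[OF lt bif] by blast
      have "y @ a \<in> ystar Y" using ystar.ys_cons[OF yt(1) ab(2)] .
      moreover have "t = (y @ a) @ b" using yt(2) ab(1) by simp
      ultimately show ?thesis using ab(3) by blast
    next
      case False
      have "t = [] @ t" by simp
      then show ?thesis using False ystar.ys_nil by blast
    qed
  qed
qed

lemma left_greedy: "bifix_code Y \<Longrightarrow> \<exists>a b. t = a @ b \<and> a \<in> ystar Y \<and> (\<forall>y\<in>Y. \<not> prefix y b)"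
  using left_greedy_aux by blast

lemma right_greedy_aux: "bifix_code Y \<Longrightarrow> \<forall>t. length t = n \<longrightarrow> (\<exists>u z. t = u @ z \<and> z \<in> ystar Y \<and> (\<forall>y\<in>Y. \<not> suffix y u))"
proof (induction n rule: less_induct)
  case (less n)
  note bif = \<open>bifix_code Y\<close>
  show ?case
  proof (intro allI impI)
    fix t :: "'a list" assume len: "length t = n"
    show "\<exists>u z. t = u @ z \<and> z \<in> ystar Y \<and> (\<forall>y\<in>Y. \<not> suffix y u)"
    proof (cases "\<exists>y\<in>Y. suffix y t")
      case True
      then obtain y t' where yt: "y \<in> Y" "t = t' @ y" by (auto simp: suffix_def)
      have "y \<noteq> []" using yt(1) bif unfolding bifix_code_def by blast
      then have "length y > 0" by simp
      then have lt: "length t' < n" using len arg_cong[OF yt(2), of length] by (cases y) auto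
      obtain u z where uz: "t' = u @ z" "z \<in> ystar Y" "\<forall>y\<in>Y. \<not> suffix y u"
        using less.IH[OF lt bif] by blast
      have "z @ y \<in> ystar Y" using ystar_app[OF uz(2) ystar_single[OF yt(1)]] .
      moreover have "t = u @ (z @ y)" using yt(2) uz(1) by simp
      ultimately show ?thesis using uz(3) by blast
    next
      case False
      have "t = t @ []" by simp
      then show ?thesis using False ystar.ys_nil by blast
    qed
  qed
qed

lemma right_greedy: "bifix_code Y \<Longrightarrow> \<exists>u z. t = u @ z \<and> z \<in> ystar Y \<and> (\<forall>y\<in>Y. \<not> suffix y u)"
  using right_greedy_aux by blast

definition NS :: "'a list set \<Rightarrow> 'a list \<Rightarrow> nat set" where
  "NS Y w = {k. k \<le> length w \<and> (\<forall>y\<in>Y. \<not> suffix y (take k w))}"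

lemma NS_finite: "finite (NS Y w)"
proof -
  have "NS Y w \<subseteq> {..length w}" unfolding NS_def by auto
  then show ?thesis using finite_subset by blast
qed

lemma NS_zero: "bifix_code Y \<Longrightarrow> 0 \<in> NS Y w"
  unfolding NS_def bifix_code_def by auto

lemma take_split: "i \<le> j \<Longrightarrow> j \<le> k \<Longrightarrow> k \<le> length w \<Longrightarrow>
   drop i (take k w) = drop i (take j w) @ drop j (take k w)"
proof -
  assume h: "i \<le> j" "j \<le> k" "k \<le> length w"
  have e: "take k w = take j w @ drop j (take k w)"
    using h(2) by (metis append_take_drop_id min.absorb1 take_take)
  have "length (take j w) \<ge> i" using h by simp
  then show ?thesis apply (subst e) using h by (simp add: drop_append)
qed

lemma suffix_trans': "suffix a b \<Longrightarrow> suffix b c \<Longrightarrow> suffix a c"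
  by (auto simp: suffix_def)

lemma sublist_trans': "sublist a b \<Longrightarrow> sublist b c \<Longrightarrow> sublist a c"
  using sublist_order.order_trans by blast

lemma suffix_same_len: "suffix a c \<Longrightarrow> suffix b c \<Longrightarrow> length a = length b \<Longrightarrow> a = b"
  by (metis append_eq_append_conv suffix_def)

lemma prefix_take_len: "prefix u y \<Longrightarrow> take (length u) y = u"
  by (auto simp: prefix_def)

lemma NS_bound:
  assumes bif: "bifix_code Y" and fac: "factorial_set F" and w: "w \<in> F"
    and star: "\<forall>u\<in>F. m < length u \<longrightarrow> (\<exists>y\<in>Y. prefix y u \<or> suffix y u)"
  shows "card (NS Y w) \<le> Suc m"
proof -
  define P where "P = NS Y w"
  have fin: "finite P" unfolding P_def by (rule NS_finite)
  have z: "0 \<in> P" unfolding P_def by (rule NS_zero[OF bif])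
  define c where "c = Max P"
  have cP: "c \<in> P" unfolding c_def using fin z Max_in by blast
  have cmax: "\<forall>k\<in>P. k \<le> c" unfolding c_def using fin by simp
  have cle: "c \<le> length w" using cP unfolding P_def NS_def by simp
  have cns: "\<forall>y\<in>Y. \<not> suffix y (take c w)" using cP unfolding P_def NS_def by simp
  define P' where "P' = P - {c}"
  have ex: "\<forall>k\<in>P'. \<exists>p. drop k (take c w) = fst p @ snd p \<and> fst p \<in> ystar Y \<and> (\<forall>y\<in>Y. \<not> prefix y (snd p))"
  proof
    fix k
    obtain a b where "drop k (take c w) = a @ b \<and> a \<in> ystar Y \<and> (\<forall>y\<in>Y. \<not> prefix y b)"
      using left_greedy[OF bif] by blast
    then show "\<exists>p. drop k (take c w) = fst p @ snd p \<and> fst p \<in> ystar Y \<and> (\<forall>y\<in>Y. \<not> prefix y (snd p))"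
      by (intro exI[of _ "(a, b)"]) simp
  qed
  obtain f where f: "\<forall>k\<in>P'. drop k (take c w) = fst (f k) @ snd (f k) \<and> fst (f k) \<in> ystar Y \<and> (\<forall>y\<in>Y. \<not> prefix y (snd (f k)))"
    using bchoice[OF ex] by blast
  define A where "A k = fst (f k)" for k
  define B where "B k = snd (f k)" for k
  have AB: "\<forall>k\<in>P'. drop k (take c w) = A k @ B k \<and> A k \<in> ystar Y \<and> (\<forall>y\<in>Y. \<not> prefix y (B k))"
    using f unfolding A_def B_def by blast
  have kc: "\<forall>k\<in>P'. k < c" unfolding P'_def using cmax by force
  have kP: "\<forall>k\<in>P'. k \<in> P" unfolding P'_def by blast
  have Bsuf: "\<forall>k\<in>P'. suffix (B k) (take c w)"
  proof
    fix k assume k: "k \<in> P'"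
    have "suffix (B k) (drop k (take c w))" using AB k by (metis suffix_def)
    then show "suffix (B k) (take c w)" using suffix_trans' suffix_drop by blast
  qed
  have Bne: "\<forall>k\<in>P'. B k \<noteq> []"
  proof
    fix k assume k: "k \<in> P'"
    show "B k \<noteq> []"
    proof
      assume e: "B k = []"
      have d: "drop k (take c w) = A k" using AB k e by simp
      have "length (drop k (take c w)) = c - k" using cle by simp
      then have ne: "A k \<noteq> []" using d kc k by force
      obtain y where y: "y \<in> Y" "suffix y (A k)" using ystar_nonempty_suffix[of "A k" Y] AB k ne by blast
      have "suffix y (take c w)" using y(2) d suffix_trans'[OF _ suffix_drop[of k "take c w"]] by simp
      then show False using cns y(1) by blast
    qed
  qed
  have Blen: "\<forall>k\<in>P'. length (B k) \<le> m"
  proof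
    fix k assume k: "k \<in> P'"
    have "sublist (B k) (take c w)" using Bsuf k by blast
    then have "sublist (B k) w" using sublist_trans' sublist_take by blast
    then have BF: "B k \<in> F" using fac w unfolding factorial_set_def by blast
    have np: "\<forall>y\<in>Y. \<not> prefix y (B k)" using AB k by blast
    have ns: "\<forall>y\<in>Y. \<not> suffix y (B k)" using cns Bsuf k suffix_trans' by blast
    show "length (B k) \<le> m"
    proof (rule ccontr)
      assume "\<not> length (B k) \<le> m"
      then have "m < length (B k)" by simp
      then obtain y where "y \<in> Y" "prefix y (B k) \<or> suffix y (B k)" using star BF by blast
      then show False using np ns by blast
    qed
  qed
  have Bc: "\<forall>k\<in>P'. length (B k) \<le> c"
  proof
    fix k assume "k \<in> P'"
    then have "length (B k) \<le> length (take c w)" using Bsuf suffix_length_le by blast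
    then show "length (B k) \<le> c" using cle by simp
  qed
  define q where "q k = c - length (B k)" for k
  have noteq: "\<And>k1 k2. k1 \<in> P' \<Longrightarrow> k2 \<in> P' \<Longrightarrow> k1 < k2 \<Longrightarrow> q k1 \<noteq> q k2"
  proof
    fix k1 k2 assume k1: "k1 \<in> P'" and k2: "k2 \<in> P'" and lt: "k1 < k2" and qe: "q k1 = q k2"
    have l1: "length (B k1) \<le> c" and l2: "length (B k2) \<le> c" using Bc k1 k2 by auto
    have "c - length (B k1) = c - length (B k2)" using qe unfolding q_def .
    then have "length (B k1) = length (B k2)" using l1 l2 by (metis diff_diff_cancel)
    then have BB: "B k1 = B k2" using suffix_same_len Bsuf k1 k2 by blast
    have sp: "drop k1 (take c w) = drop k1 (take k2 w) @ drop k2 (take c w)"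
    proof -
      have "k2 < c" using kc k2 by blast
      then show ?thesis using take_split[of k1 k2 c w] lt cle by simp
    qed
    define s where "s = drop k1 (take k2 w)"
    have "A k1 @ B k1 = s @ A k2 @ B k2" using sp AB k1 k2 unfolding s_def by simp
    then have Ae: "A k1 = s @ A k2" using BB by simp
    have a1: "A k1 \<in> ystar Y" and a2: "A k2 \<in> ystar Y" using AB k1 k2 by auto
    have "s @ A k2 \<in> ystar Y" using a1 Ae by simp
    then have sY: "s \<in> ystar Y" using scancel[OF a2 bif] by blast
    have "k2 < c" using kc k2 by blast
    then have "length s = k2 - k1" unfolding s_def using cle by simp
    then have sne: "s \<noteq> []" using lt by force
    obtain y where y: "y \<in> Y" "suffix y s" using ystar_nonempty_suffix[OF sY sne] by blast
    have "take k2 w = take k1 w @ s" unfolding s_def using lt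
      by (metis append_take_drop_id less_imp_le_nat min.absorb1 take_take)
    then have "suffix y (take k2 w)" using y(2) suffix_appendI by metis
    moreover have "k2 \<in> P" using kP k2 by blast
    ultimately show False using y(1) unfolding P_def NS_def by blast
  qed
  have inj: "inj_on q P'"
  proof (rule inj_onI)
    fix k1 k2 assume "k1 \<in> P'" "k2 \<in> P'" "q k1 = q k2"
    then show "k1 = k2" using noteq by (metis linorder_neqE_nat)
  qed
  have img: "q ` P' \<subseteq> {c - m ..< c}"
  proof
    fix x assume "x \<in> q ` P'"
    then obtain k where k: "k \<in> P'" "x = q k" by blast
    have "length (B k) > 0" using Bne k by blast
    moreover have "length (B k) \<le> m" "length (B k) \<le> c" using Blen Bc k(1) by auto
    ultimately show "x \<in> {c - m ..< c}" using k(2) unfolding q_def by (cases "B k") auto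
  qed
  have "card P' \<le> card {c - m ..< c}" using card_inj_on_le[OF inj img] by simp
  also have "\<dots> \<le> m" by simp
  finally have "card P' \<le> m" .
  moreover have "card P = Suc (card P')" unfolding P'_def using cP fin
    by (metis card_Suc_Diff1)
  ultimately show ?thesis unfolding P_def by simp
qed

lemma NS_grow:
  assumes bif: "bifix_code Y" and yY: "y \<in> Y" and ydec: "y = pre @ w0 @ post"
    and pne: "pre \<noteq> []" and sne: "post \<noteq> []"
  shows "Suc (card (NS Y w0)) \<le> card (NS Y y)"
proof -
  define a where "a = length pre"
  define P where "P = NS Y w0"
  have tk: "\<forall>k\<in>P. take (a + k) y = pre @ take k w0"
    unfolding P_def NS_def a_def ydec by simp
  have ex: "\<forall>k\<in>P. \<exists>p. take (a + k) y = fst p @ snd p \<and> snd p \<in> ystar Y \<and> (\<forall>y\<in>Y. \<not> suffix y (fst p))"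
  proof
    fix k
    obtain u z where "take (a + k) y = u @ z \<and> z \<in> ystar Y \<and> (\<forall>y\<in>Y. \<not> suffix y u)"
      using right_greedy[OF bif] by blast
    then show "\<exists>p. take (a + k) y = fst p @ snd p \<and> snd p \<in> ystar Y \<and> (\<forall>y\<in>Y. \<not> suffix y (fst p))"
      by (intro exI[of _ "(u, z)"]) simp
  qed
  obtain g where g: "\<forall>k\<in>P. take (a + k) y = fst (g k) @ snd (g k) \<and> snd (g k) \<in> ystar Y \<and> (\<forall>y\<in>Y. \<not> suffix y (fst (g k)))"
    using bchoice[OF ex] by blast
  define U where "U k = fst (g k)" for k
  define Z where "Z k = snd (g k)" for k
  have UZ: "\<forall>k\<in>P. take (a + k) y = U k @ Z k \<and> Z k \<in> ystar Y \<and> (\<forall>y\<in>Y. \<not> suffix y (U k))"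
    using g unfolding U_def Z_def by blast
  define f where "f k = length (U k)" for k
  have kle: "\<forall>k\<in>P. k \<le> length w0" unfolding P_def NS_def by simp
  have ylen: "length y = a + length w0 + length post" unfolding a_def ydec by simp
  have postpos: "length post > 0" using sne by simp
  have Upre: "\<forall>k\<in>P. prefix (U k) y"
  proof
    fix k assume k: "k \<in> P"
    have "prefix (U k) (take (a + k) y)" using UZ k by (metis prefix_def)
    then show "prefix (U k) y" using prefix_order.trans take_is_prefix by blast
  qed
  have Utake: "\<forall>k\<in>P. take (f k) y = U k"
    unfolding f_def using Upre prefix_take_len by blast
  have fNS: "\<forall>k\<in>P. f k \<in> NS Y y"
  proof
    fix k assume k: "k \<in> P"
    have "f k \<le> length y" unfolding f_def using Upre k prefix_length_le by blast
    then show "f k \<in> NS Y y" unfolding NS_def using Utake UZ k by simp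
  qed
  have fnz: "\<forall>k\<in>P. f k \<noteq> 0"
  proof
    fix k assume k: "k \<in> P"
    show "f k \<noteq> 0"
    proof
      assume "f k = 0"
      then have "U k = []" unfolding f_def by simp
      then have tz: "take (a + k) y \<in> ystar Y" using UZ k by simp
      have "take (a + k) y \<noteq> []" using tk k pne by simp
      then obtain y' r where yr: "take (a + k) y = y' @ r" "y' \<in> Y" "r \<in> ystar Y"
        using ystar_cons_dec[OF tz] by blast
      have "prefix y' (take (a + k) y)" using yr(1) by simp
      then have "prefix y' y" using prefix_order.trans take_is_prefix by blast
      then have "y' = y" using bif_prefix_eq[OF bif yr(2) yY] by blast
      then have "length y \<le> length (take (a + k) y)" using yr(1) by simp
      also have "\<dots> \<le> a + k" by simp
      also have "\<dots> \<le> a + length w0" using kle k by simp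
      finally show False using ylen postpos by simp
    qed
  qed
  have noteq: "\<And>k1 k2. k1 \<in> P \<Longrightarrow> k2 \<in> P \<Longrightarrow> k1 < k2 \<Longrightarrow> f k1 \<noteq> f k2"
  proof
    fix k1 k2 assume k1: "k1 \<in> P" and k2: "k2 \<in> P" and lt: "k1 < k2" and fe: "f k1 = f k2"
    have UU: "U k1 = U k2" using Utake k1 k2 fe by metis
    define s where "s = drop k1 (take k2 w0)"
    have tw: "take k2 w0 = take k1 w0 @ s" unfolding s_def using lt
      by (metis append_take_drop_id less_imp_le_nat min.absorb1 take_take)
    have "take (a + k2) y = take (a + k1) y @ s" using tk k1 k2 tw by simp
    then have "U k2 @ Z k2 = U k1 @ Z k1 @ s" using UZ k1 k2 by simp
    then have Ze: "Z k2 = Z k1 @ s" using UU by simp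
    have z1: "Z k1 \<in> ystar Y" and z2: "Z k2 \<in> ystar Y" using UZ k1 k2 by auto
    have sY: "s \<in> ystar Y" using pcancel[OF z1 bif] z2 Ze by simp
    have "length s = k2 - k1" unfolding s_def using kle k2 by simp
    then have sne: "s \<noteq> []" using lt by force
    obtain y' where y': "y' \<in> Y" "suffix y' s" using ystar_nonempty_suffix[OF sY sne] by blast
    have "suffix y' (take k2 w0)" using y'(2) tw suffix_appendI by metis
    then show False using k2 y'(1) unfolding P_def NS_def by blast
  qed
  have inj: "inj_on f P"
  proof (rule inj_onI)
    fix k1 k2 assume "k1 \<in> P" "k2 \<in> P" "f k1 = f k2"
    then show "k1 = k2" using noteq by (metis linorder_neqE_nat)
  qed
  have img: "f ` P \<subseteq> NS Y y - {0}"
  proof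
    fix x assume "x \<in> f ` P"
    then obtain k where "k \<in> P" "x = f k" by blast
    then show "x \<in> NS Y y - {0}" using fNS fnz by simp
  qed
  have "card P = card (f ` P)" using card_image[OF inj] by simp
  also have "\<dots> \<le> card (NS Y y - {0})" using card_mono[OF _ img] NS_finite by blast
  also have "\<dots> = card (NS Y y) - 1" using NS_zero[OF bif] NS_finite by simp
  finally have "card P \<le> card (NS Y y) - 1" .
  moreover have "card (NS Y y) > 0" using NS_zero[OF bif] NS_finite card_gt_0_iff by blast
  ultimately show ?thesis unfolding P_def by simp
qed

lemma finite_code:
  assumes finA: "finite A" and FA: "F \<subseteq> lists A" and fac: "factorial_set F" and Fne: "F \<noteq> {}"
    and ur: "\<forall>u\<in>F. \<exists>n\<ge>1. \<forall>w\<in>F. length w = n \<longrightarrow> sublist u w"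
    and bif: "bifix_code Y" and YF: "Y \<subseteq> F" and bound: "\<forall>w\<in>F. card (NS Y w) \<le> B"
  shows "finite Y"
proof -
  define S where "S = (\<lambda>w. card (NS Y w)) ` F"
  have "S \<subseteq> {..B}" unfolding S_def using bound by auto
  then have Sfin: "finite S" using finite_subset by blast
  have Sne: "S \<noteq> {}" unfolding S_def using Fne by simp
  have "Max S \<in> S" using Max_in[OF Sfin Sne] .
  then obtain w0 where w0: "w0 \<in> F" "card (NS Y w0) = Max S" unfolding S_def by auto
  have w0max: "\<forall>w\<in>F. card (NS Y w) \<le> card (NS Y w0)"
  proof
    fix w assume "w \<in> F"
    then have "card (NS Y w) \<in> S" unfolding S_def by blast
    then show "card (NS Y w) \<le> card (NS Y w0)" using w0(2) Max_ge[OF Sfin] by simp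
  qed
  obtain n where n: "n \<ge> 1" "\<forall>w\<in>F. length w = n \<longrightarrow> sublist w0 w" using ur w0(1) by blast
  have lenb: "\<forall>y\<in>Y. length y \<le> Suc n"
  proof (rule ballI, rule ccontr)
    fix y assume yY: "y \<in> Y" and nl: "\<not> length y \<le> Suc n"
    then have len: "length y \<ge> n + 2" by simp
    have yF: "y \<in> F" using yY YF by blast
    define v where "v = take n (drop 1 y)"
    have "sublist v (drop 1 y)" unfolding v_def by (rule sublist_take)
    then have "sublist v y" using sublist_trans' sublist_drop by blast
    then have vF: "v \<in> F" using fac yF unfolding factorial_set_def by blast
    have vlen: "length v = n" unfolding v_def using len by simp
    have "sublist w0 v" using n(2) vF vlen by blast
    then obtain p s where vps: "v = p @ w0 @ s" unfolding sublist_def by blast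
    have "y = take 1 y @ drop 1 y" by simp
    also have "drop 1 y = v @ drop n (drop 1 y)" unfolding v_def by (rule append_take_drop_id[symmetric])
    finally have "y = (take 1 y @ p) @ w0 @ (s @ drop n (drop 1 y))" using vps by simp
    moreover have "take 1 y @ p \<noteq> []" using len by (cases y) auto
    moreover have "s @ drop n (drop 1 y) \<noteq> []" using len by simp
    ultimately have "Suc (card (NS Y w0)) \<le> card (NS Y y)" using NS_grow[OF bif yY] by blast
    then show False using w0max yF by force
  qed
  have "Y \<subseteq> {xs. set xs \<subseteq> A \<and> length xs \<le> Suc n}"
  proof
    fix y assume "y \<in> Y"
    then show "y \<in> {xs. set xs \<subseteq> A \<and> length xs \<le> Suc n}" using lenb YF FA by auto
  qed
  then show ?thesis using finite_lists_length_le[OF finA] finite_subset by blast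
qed

definition inc :: "'a list \<Rightarrow> 'a list \<Rightarrow> bool" where
  "inc u v \<longleftrightarrow> \<not> strict_prefix u v \<and> \<not> strict_prefix v u \<and> \<not> strict_suffix u v \<and> \<not> strict_suffix v u"

lemma inc_sym: "inc u v = inc v u" unfolding inc_def by blast

primrec G :: "'a list set \<Rightarrow> 'a list set \<Rightarrow> nat \<Rightarrow> 'a list set" where
  "G F X 0 = {}"
| "G F X (Suc n) = G F X n \<union> {w \<in> F. length w = Suc n \<and> (\<forall>y \<in> X \<union> G F X n. inc w y)}"

lemma G_len: "w \<in> G F X n \<Longrightarrow> 1 \<le> length w \<and> length w \<le> n"
  by (induction n) auto

lemma G_sub: "G F X n \<subseteq> F"
  by (induction n) auto

lemma G_mono: "k \<le> n \<Longrightarrow> G F X k \<subseteq> G F X n"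
  by (induction n) (auto simp: le_Suc_eq)

lemma G_new: "length w = Suc k \<Longrightarrow> w \<in> G F X (Suc k) \<longleftrightarrow> w \<in> F \<and> (\<forall>y\<in>X \<union> G F X k. inc w y)"
  using G_len[of w F X k] by auto

lemma G_at: "w \<in> G F X n \<Longrightarrow> w \<in> G F X (length w)"
proof (induction n)
  case 0 then show ?case by simp
next
  case (Suc n)
  show ?case
  proof (cases "w \<in> G F X n")
    case True then show ?thesis using Suc.IH by blast
  next
    case False
    then have "w \<in> {w \<in> F. length w = Suc n \<and> (\<forall>y \<in> X \<union> G F X n. inc w y)}"
      using Suc.prems by simp
    then have "length w = Suc n" by blast
    then show ?thesis using Suc.prems by simp
  qed
qed

lemma G_cmp:
  assumes u: "u \<in> G F X i" and v: "v \<in> G F X j" and lt: "length u < length v"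
  shows "inc v u"
proof -
  have v': "v \<in> G F X (length v)" using G_at[OF v] .
  have "1 \<le> length v" using G_len[OF v] by blast
  then obtain k where k: "length v = Suc k" by (cases "length v") auto
  have "u \<in> G F X (length u)" using G_at[OF u] .
  moreover have "length u \<le> k" using lt k by simp
  ultimately have uk: "u \<in> G F X k" using G_mono[of "length u" k F X] by blast
  have "v \<in> G F X (Suc k)" using v' k by simp
  then have "\<forall>y\<in>X \<union> G F X k. inc v y" using G_new[OF k] by blast
  then show ?thesis using uk by blast
qed

lemma G_props:
  fixes F X :: "'a list set"
  assumes bifX: "bifix_code X" and XF: "X \<subseteq> F" and m: "\<forall>x\<in>X. length x \<le> m"
  defines "Y \<equiv> (\<Union>n. G F X n)"
  shows "Y \<subseteq> F" and "X \<subseteq> Y" and "bifix_code Y"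
    and "\<forall>u\<in>F. m < length u \<longrightarrow> (\<exists>y\<in>Y. prefix y u \<or> suffix y u)"
    and "F_maximal_bifix F Y"
proof -
  show YF: "Y \<subseteq> F" unfolding Y_def using G_sub by blast
  have incX: "\<And>x y. x \<in> X \<Longrightarrow> y \<in> X \<Longrightarrow> inc x y"
    using bifX unfolding bifix_code_def inc_def by blast
  show XY: "X \<subseteq> Y"
  proof
    fix x assume x: "x \<in> X"
    have "x \<noteq> []" using x bifX unfolding bifix_code_def by blast
    then obtain k where k: "length x = Suc k" by (cases x) auto
    have "\<forall>y\<in>X \<union> G F X k. inc x y"
    proof
      fix y assume y: "y \<in> X \<union> G F X k"
      show "inc x y"
      proof (cases "y \<in> X")
        case True then show ?thesis using incX x by blast
      next
        case False
        then have yG: "y \<in> G F X k" using y by blast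
        obtain j where j: "length y = Suc j" using G_len[OF yG] by (cases "length y") auto
        have "y \<in> G F X (Suc j)" using G_at[OF yG] j by simp
        then have "\<forall>z\<in>X \<union> G F X j. inc y z" using G_new[OF j] by blast
        then show ?thesis using x inc_sym by blast
      qed
    qed
    then have "x \<in> G F X (Suc k)" using G_new[OF k] x XF by blast
    then show "x \<in> Y" unfolding Y_def by blast
  qed
  have incY: "\<And>u v. u \<in> Y \<Longrightarrow> v \<in> Y \<Longrightarrow> \<not> strict_prefix u v \<and> \<not> strict_suffix u v"
  proof -
    fix u v assume u: "u \<in> Y" and v: "v \<in> Y"
    obtain i j where ui: "u \<in> G F X i" and vj: "v \<in> G F X j" using u v unfolding Y_def by blast
    show "\<not> strict_prefix u v \<and> \<not> strict_suffix u v"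
    proof (cases "length u < length v")
      case True then show ?thesis using G_cmp[OF ui vj] unfolding inc_def by blast
    next
      case False then show ?thesis using prefix_length_less suffix_length_less by fastforce
    qed
  qed
  show bifY: "bifix_code Y"
    unfolding bifix_code_def
  proof
    show "[] \<notin> Y" unfolding Y_def using G_len by fastforce
    show "\<forall>x\<in>Y. \<forall>y\<in>Y. \<not> strict_prefix x y \<and> \<not> strict_suffix x y" using incY by blast
  qed
  show "\<forall>u\<in>F. m < length u \<longrightarrow> (\<exists>y\<in>Y. prefix y u \<or> suffix y u)"
  proof (intro ballI impI)
    fix u assume uF: "u \<in> F" and ml: "m < length u"
    obtain k where k: "length u = Suc k" using ml by (cases "length u") auto
    show "\<exists>y\<in>Y. prefix y u \<or> suffix y u"
    proof (cases "u \<in> G F X (Suc k)")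
      case True then show ?thesis unfolding Y_def by blast
    next
      case False
      then obtain y where y: "y \<in> X \<union> G F X k" "\<not> inc u y" using G_new[OF k] uF by blast
      have yY: "y \<in> Y" using y(1) XY unfolding Y_def by blast
      have "length y < length u"
      proof (cases "y \<in> X")
        case True then show ?thesis using m ml by fastforce
      next
        case False then have "y \<in> G F X k" using y(1) by blast
        then show ?thesis using G_len k by fastforce
      qed
      then have "strict_prefix y u \<or> strict_suffix y u"
        using y(2) prefix_length_less suffix_length_less unfolding inc_def by fastforce
      then have "prefix y u \<or> suffix y u" unfolding strict_prefix_def strict_suffix_def by blast
      then show ?thesis using yY by blast
    qed
  qed
  show "F_maximal_bifix F Y"
    unfolding F_maximal_bifix_def
  proof (intro conjI allI impI)
    show "bifix_code Y" by (rule bifY)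
    show "Y \<subseteq> F" by (rule YF)
    fix Z assume Z: "bifix_code Z \<and> Z \<subseteq> F \<and> Y \<subseteq> Z"
    show "Z = Y"
    proof
      show "Y \<subseteq> Z" using Z by blast
      show "Z \<subseteq> Y"
      proof
        fix z assume zZ: "z \<in> Z"
        have "z \<noteq> []" using zZ Z unfolding bifix_code_def by blast
        then obtain k where k: "length z = Suc k" by (cases z) auto
        have zF: "z \<in> F" using zZ Z by blast
        show "z \<in> Y"
        proof (rule ccontr)
          assume "z \<notin> Y"
          then have "z \<notin> G F X (Suc k)" unfolding Y_def by blast
          then obtain y where y: "y \<in> X \<union> G F X k" "\<not> inc z y" using G_new[OF k] zF by blast
          have "y \<in> Y" using y(1) XY unfolding Y_def by blast
          then have "y \<in> Z" using Z by blast
          then have "inc z y" using zZ Z unfolding bifix_code_def inc_def by blast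
          then show False using y(2) by blast
        qed
      qed
    qed
  qed
qed

theorem mainTheorem10:
  fixes A :: "'a set" and F :: "'a list set"
  assumes "finite A" and "uniformly_recurrent A F"
  shows "(\<forall>X. bifix_code X \<and> X \<subseteq> F \<and> F_thin F X \<longrightarrow> finite X) \<and>
         (\<forall>X. bifix_code X \<and> X \<subseteq> F \<and> finite X \<longrightarrow>
              (\<exists>Y. X \<subseteq> Y \<and> finite Y \<and> Y \<subseteq> F \<and> F_maximal_bifix F Y))"
proof -
  note finA = assms(1)
  have FA: "F \<subseteq> lists A" and Fne: "F \<noteq> {}" and fac: "factorial_set F"
    and ur: "\<forall>u\<in>F. \<exists>n\<ge>1. \<forall>w\<in>F. length w = n \<longrightarrow> sublist u w"
    using assms(2) unfolding uniformly_recurrent_def by blast+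
  have part1: "\<forall>X. bifix_code X \<and> X \<subseteq> F \<and> F_thin F X \<longrightarrow> finite X"
  proof (intro allI impI)
    fix X assume h: "bifix_code X \<and> X \<subseteq> F \<and> F_thin F X"
    then obtain w where w: "w \<in> F" "\<forall>x\<in>X. \<not> sublist w x" unfolding F_thin_def by blast
    obtain n where n: "n \<ge> 1" "\<forall>v\<in>F. length v = n \<longrightarrow> sublist w v" using ur w(1) by blast
    have "\<forall>x\<in>X. length x < n"
    proof (rule ballI, rule ccontr)
      fix x assume x: "x \<in> X" and nl: "\<not> length x < n"
      have xF: "x \<in> F" using x h by blast
      have "take n x \<in> F" using fac xF sublist_take unfolding factorial_set_def by blast
      moreover have "length (take n x) = n" using nl by simp
      ultimately have "sublist w (take n x)" using n(2) by blast
      then have "sublist w x" using sublist_trans' sublist_take by blast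
      then show False using w(2) x by blast
    qed
    then have "X \<subseteq> {xs. set xs \<subseteq> A \<and> length xs \<le> n}" using h FA by fastforce
    then show "finite X" using finite_lists_length_le[OF finA] finite_subset by blast
  qed
  have part2: "\<forall>X. bifix_code X \<and> X \<subseteq> F \<and> finite X \<longrightarrow>
              (\<exists>Y. X \<subseteq> Y \<and> finite Y \<and> Y \<subseteq> F \<and> F_maximal_bifix F Y)"
  proof (intro allI impI)
    fix X assume h: "bifix_code X \<and> X \<subseteq> F \<and> finite X"
    have "finite (length ` X)" using h by simp
    then obtain m where m: "\<forall>k\<in>length ` X. k \<le> m" using finite_nat_set_iff_bounded_le by blast
    then have m': "\<forall>x\<in>X. length x \<le> m" by blast
    define Y where "Y = (\<Union>n. G F X n)"
    have bifX: "bifix_code X" and XF: "X \<subseteq> F" using h by auto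
    have YF: "Y \<subseteq> F" and XY: "X \<subseteq> Y" and bifY: "bifix_code Y"
      and st: "\<forall>u\<in>F. m < length u \<longrightarrow> (\<exists>y\<in>Y. prefix y u \<or> suffix y u)"
      and mx: "F_maximal_bifix F Y"
      using G_props[OF bifX XF m'] unfolding Y_def by blast+
    have bound: "\<forall>w\<in>F. card (NS Y w) \<le> Suc m"
      using NS_bound[OF bifY fac _ st] by blast
    have "finite Y" using finite_code[OF finA FA fac Fne ur bifY YF bound] .
    then show "\<exists>Y. X \<subseteq> Y \<and> finite Y \<and> Y \<subseteq> F \<and> F_maximal_bifix F Y"
      using XY YF mx by blast
  qed
  show ?thesis using part1 part2 by blast
qed

end
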